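(* Let $0<b<c$ and let $(x_1,y_1),\ldots,(x_T,y_T)\in\mathbb{R}^d\times\{-1,+1\}$ be an arbitrary finite sequence of examples. Run the LASEC algorithm (described in the context) on this sequence, and let $t_1<t_2<\cdots<t_m$ be the rounds on which it makes a mistake, so that $m$ is its total number of mistakes. For $k=1,\ldots,m$ let $D_k$ be the matrix stored after the $k$-th update. Then for every sequence of vectors $u_1,\ldots,u_T\in\mathbb{R}^d$ and every $\gamma>0$, $$m\le \frac{1}{\gamma}L_{\gamma,T}(\{u_t\})+\frac{1}{\gamma}\sqrt{\Big(b\|u_{t_1}\|^2+cV_m+\sum_{k=1}^{m}(u_{t_k}^\top x_{t_k})^2\Big)\sum_{k=1}^{m}x_{t_k}^\top D_k^{-1}x_{t_k}},$$ where $V_m=\sum_{k=2}^{m}\|u_{t_k}-u_{t_{k-1}}\|^2$.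
   Context: LASEC algorithm with parameters $0<b<c$. Initialize $D_0=\frac{bc}{c-b}I\in\mathbb{R}^{d\times d}$, $e_0=0\in\mathbb{R}^d$, $k=1$. For $t=1,\ldots,T$: receive $x_t$; set $S_t=(D_{k-1}^{-1}+c^{-1}I)^{-1}+x_tx_t^\top$ and $\hat p_t=x_t^\top S_t^{-1}(I+c^{-1}D_{k-1})^{-1}e_{k-1}$; predict $\hat y_t=\mathrm{sign}(\hat p_t)$; receive $y_t$; if $\hat y_t\ne y_t$ (a mistake), set $e_k=(I+c^{-1}D_{k-1})^{-1}e_{k-1}+y_tx_t$, $D_k=S_t$, and $k\leftarrow k+1$. Hinge loss: $\ell_{\gamma,t}(u)=\max\{0,\gamma-y_tu^\top x_t\}$, and $L_{\gamma,T}(\{u_t\})=\sum_{t=1}^T\ell_{\gamma,t}(u_t)$. *)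

theory Defs
  imports "HOL-Analysis.Analysis"
begin

type_synonym 'd mat = "real ^ 'd ^ 'd"
type_synonym 'd vec = "real ^ 'd"

definition outer :: "'d::finite vec \<Rightarrow> 'd mat" where
  "outer x = (\<chi> i j. x $ i * x $ j)"

definition lasec_D0 :: "real \<Rightarrow> real \<Rightarrow> 'd::finite mat" where
  "lasec_D0 b c = mat (b * c / (c - b))"

definition lasec_S :: "real \<Rightarrow> 'd::finite mat \<Rightarrow> 'd vec \<Rightarrow> 'd mat" where
  "lasec_S c D x = matrix_inv (matrix_inv D + mat (1 / c)) + outer x"

definition lasec_p :: "real \<Rightarrow> 'd::finite mat \<Rightarrow> 'd vec \<Rightarrow> 'd vec \<Rightarrow> real" where
  "lasec_p c D e x =
     x \<bullet> (matrix_inv (lasec_S c D x) *v (matrix_inv (mat 1 + (1 / c) *\<^sub>R D) *v e))"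

text \<open>State (D, e) of LASEC after rounds 1..t (rounds are indexed from 1).\<close>
fun lasec_state :: "real \<Rightarrow> real \<Rightarrow> (nat \<Rightarrow> 'd::finite vec) \<Rightarrow> (nat \<Rightarrow> real) \<Rightarrow> nat
      \<Rightarrow> 'd mat \<times> 'd vec" where
  "lasec_state b c x y 0 = (lasec_D0 b c, 0)"
| "lasec_state b c x y (Suc t) =
     (let (D, e) = lasec_state b c x y t;
          p = lasec_p c D e (x (Suc t))
      in if sgn p \<noteq> y (Suc t)
         then (lasec_S c D (x (Suc t)),
               matrix_inv (mat 1 + (1 / c) *\<^sub>R D) *v e + y (Suc t) *\<^sub>R x (Suc t))
         else (D, e))"

definition lasec_mistake :: "real \<Rightarrow> real \<Rightarrow> (nat \<Rightarrow> 'd::finite vec) \<Rightarrow> (nat \<Rightarrow> real) \<Rightarrow> nat \<Rightarrow> bool" where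
  "lasec_mistake b c x y t =
     (let (D, e) = lasec_state b c x y (t - 1) in sgn (lasec_p c D e (x t)) \<noteq> y t)"

definition lasec_mistakes :: "real \<Rightarrow> real \<Rightarrow> (nat \<Rightarrow> 'd::finite vec) \<Rightarrow> (nat \<Rightarrow> real) \<Rightarrow> nat \<Rightarrow> nat set" where
  "lasec_mistakes b c x y T = {t \<in> {1..T}. lasec_mistake b c x y t}"

definition hinge_total :: "real \<Rightarrow> (nat \<Rightarrow> 'd::finite vec) \<Rightarrow> (nat \<Rightarrow> real) \<Rightarrow> (nat \<Rightarrow> 'd vec) \<Rightarrow> nat \<Rightarrow> real" where
  "hinge_total \<gamma> x y u T = (\<Sum>t = 1..T. max 0 (\<gamma> - y t * (u t \<bullet> x t)))"

end

theory Submission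
  imports Defs
begin

lemma mat_mulv: "mat k *v (v::real^'n::finite) = k *\<^sub>R v"
  by (simp add: vec_eq_iff matrix_vector_mult_def mat_def if_distrib if_distribR sum.delta cong: if_cong)

lemma outer_mulv: "outer x *v w = (x \<bullet> w) *\<^sub>R x"
  by (simp add: vec_eq_iff matrix_vector_mult_def outer_def inner_vec_def sum_distrib_left sum_distrib_right mult_ac)

lemma scaleR_mat_mulv: "(k *\<^sub>R A) *v (v::real^'n::finite) = k *\<^sub>R (A *v v)"
  by (simp add: scaleR_matrix_vector_assoc)

lemma inv_props:
  fixes A :: "real^'n::finite^'n"
  assumes "invertible A"
  shows "A ** matrix_inv A = mat 1" "matrix_inv A ** A = mat 1"
  using someI_ex[OF assms[unfolded invertible_def]] unfolding matrix_inv_def by auto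

lemma inv_unique:
  fixes A B :: "real^'n::finite^'n"
  assumes "A ** B = mat 1"
  shows "matrix_inv A = B"
proof -
  have i: "invertible A" using assms invertible_right_inverse by blast
  have "matrix_inv A = matrix_inv A ** (A ** B)" by (simp add: assms)
  also have "\<dots> = B" by (simp add: matrix_mul_assoc inv_props(2)[OF i])
  finally show ?thesis .
qed

lemma inv_mulv:
  fixes A :: "real^'n::finite^'n"
  assumes "invertible A"
  shows "A *v (matrix_inv A *v v) = v" "matrix_inv A *v (A *v v) = v"
  by (simp_all add: matrix_vector_mul_assoc inv_props[OF assms])


definition pdm :: "real^'n::finite^'n \<Rightarrow> bool" where
  "pdm M \<longleftrightarrow> (\<forall>v w. v \<bullet> (M *v w) = (M *v v) \<bullet> w) \<and> (\<forall>v. v \<noteq> 0 \<longrightarrow> 0 < v \<bullet> (M *v v))"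

lemma pdm_sym: "pdm M \<Longrightarrow> v \<bullet> (M *v w) = (M *v v) \<bullet> w"
  unfolding pdm_def by blast

lemma pdm_pos: "pdm M \<Longrightarrow> v \<noteq> 0 \<Longrightarrow> 0 < v \<bullet> (M *v v)"
  unfolding pdm_def by blast

lemma pdm_nonneg: "pdm M \<Longrightarrow> 0 \<le> v \<bullet> (M *v v)"
  using pdm_pos[of M v] by (cases "v = 0") auto

lemma pdm_invertible:
  assumes "pdm M" shows "invertible M"
proof -
  have "\<forall>v. M *v v = 0 \<longrightarrow> v = 0"
    using pdm_pos[OF assms] by (metis inner_zero_right less_irrefl)
  then show ?thesis using matrix_left_invertible_ker invertible_left_inverse by blast
qed

lemma pdm_inv:
  assumes "pdm M" shows "pdm (matrix_inv M)"
proof -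
  have i: "invertible M" using pdm_invertible[OF assms] .
  have s: "v \<bullet> (matrix_inv M *v w) = (matrix_inv M *v v) \<bullet> w" for v w
  proof -
    have "v \<bullet> (matrix_inv M *v w) = (M *v (matrix_inv M *v v)) \<bullet> (matrix_inv M *v w)"
      by (simp add: inv_mulv[OF i])
    also have "\<dots> = (matrix_inv M *v v) \<bullet> (M *v (matrix_inv M *v w))"
      using pdm_sym[OF assms] by (metis inner_commute)
    also have "\<dots> = (matrix_inv M *v v) \<bullet> w" by (simp add: inv_mulv[OF i])
    finally show ?thesis .
  qed
  have p: "0 < v \<bullet> (matrix_inv M *v v)" if "v \<noteq> 0" for v
  proof -
    have nz: "matrix_inv M *v v \<noteq> 0" using that inv_mulv(1)[OF i, of v] by auto
    have "v \<bullet> (matrix_inv M *v v) = (M *v (matrix_inv M *v v)) \<bullet> (matrix_inv M *v v)"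
      by (simp add: inv_mulv[OF i])
    also have "\<dots> = (matrix_inv M *v v) \<bullet> (M *v (matrix_inv M *v v))" by (simp add: inner_commute)
    finally show ?thesis using pdm_pos[OF assms nz] by simp
  qed
  show ?thesis unfolding pdm_def using s p by blast
qed

lemma pdm_mat: "0 < a \<Longrightarrow> pdm (mat a :: real^'n::finite^'n)"
  unfolding pdm_def by (auto simp: mat_mulv inner_commute)

lemma pdm_add_mat:
  assumes "pdm A" "0 < a" shows "pdm (A + mat a)"
  using assms unfolding pdm_def
  by (auto simp: mat_mulv matrix_vector_mult_add_rdistrib inner_add_left inner_add_right
      inner_commute add_pos_pos)

lemma pdm_add_outer:
  assumes "pdm A" shows "pdm (A + outer x)"
proof -
  have "0 < v \<bullet> ((A + outer x) *v v)" if "v \<noteq> 0" for v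
  proof -
    have "v \<bullet> ((A + outer x) *v v) = v \<bullet> (A *v v) + (x \<bullet> v)^2"
      by (simp add: matrix_vector_mult_add_rdistrib outer_mulv inner_add_right power2_eq_square inner_commute)
    then show ?thesis using pdm_pos[OF assms that] by (smt (verit) zero_le_power2)
  qed
  moreover have "v \<bullet> ((A + outer x) *v w) = ((A + outer x) *v v) \<bullet> w" for v w
    using pdm_sym[OF assms, of v w]
    by (simp add: matrix_vector_mult_add_rdistrib outer_mulv inner_add_right inner_add_left inner_commute)
  ultimately show ?thesis unfolding pdm_def by blast
qed

lemma inv_shift:
  fixes D :: "real^'n::finite^'n"
  assumes "pdm D" "0 < c"
  shows "matrix_inv (mat 1 + (1 / c) *\<^sub>R D) = matrix_inv (matrix_inv D + mat (1 / c)) ** matrix_inv D"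
proof (rule inv_unique)
  let ?Q = "matrix_inv D + mat (1 / c)"
  have pQ: "pdm ?Q" using pdm_add_mat[OF pdm_inv[OF assms(1)]] assms(2) by simp
  have iQ: "invertible ?Q" using pdm_invertible[OF pQ] .
  have iD: "invertible D" using pdm_invertible[OF assms(1)] .
  have e: "mat 1 + (1 / c) *\<^sub>R D = D ** ?Q"
    unfolding matrix_eq
    by (simp add: matrix_vector_mult_add_rdistrib mat_mulv scaleR_mat_mulv
        matrix_vector_right_distrib matrix_vector_mult_scaleR
        flip: matrix_vector_mul_assoc add: inv_mulv[OF iD])
  show "(mat 1 + (1 / c) *\<^sub>R D) ** (matrix_inv ?Q ** matrix_inv D) = mat 1"
    unfolding e
    by (metis inv_props iD iQ matrix_mul_assoc matrix_mul_rid)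
qed


lemma infconv:
  fixes D :: "real^'n::finite^'n"
  assumes pD: "pdm D" and c: "0 < c"
  shows "(v - a) \<bullet> (matrix_inv (matrix_inv D + mat (1 / c)) *v (v - a))
         \<le> (w - a) \<bullet> (D *v (w - a)) + c * (norm (v - w))\<^sup>2"
proof -
  define Di where "Di = matrix_inv D"
  define Q where "Q = Di + mat (1 / c)"
  define s where "s = v - a"
  define z where "z = w - a"
  define t where "t = matrix_inv Q *v s"
  define r where "r = s - z"
  have iD: "invertible D" using pdm_invertible[OF pD] .
  have pQ: "pdm Q" unfolding Q_def Di_def using pdm_add_mat[OF pdm_inv[OF pD]] c by simp
  have iQ: "invertible Q" using pdm_invertible[OF pQ] .
  have h1: "Di *v t + (1 / c) *\<^sub>R t = s"
    using inv_mulv(1)[OF iQ, of s] unfolding t_def Q_def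
    by (simp add: matrix_vector_mult_add_rdistrib mat_mulv)
  have DDi: "D *v (Di *v t) = t" unfolding Di_def using inv_mulv[OF iD] by simp
  have h2: "0 \<le> z \<bullet> (D *v z) - 2 * (z \<bullet> t) + t \<bullet> (Di *v t)"
  proof -
    have "0 \<le> (z - Di *v t) \<bullet> (D *v (z - Di *v t))" using pdm_nonneg[OF pD] .
    also have "\<dots> = z \<bullet> (D *v z) - z \<bullet> t - (Di *v t) \<bullet> (D *v z) + (Di *v t) \<bullet> t"
      by (simp add: matrix_vector_mult_diff_distrib DDi inner_diff_left inner_diff_right)
    also have "(Di *v t) \<bullet> (D *v z) = t \<bullet> z"
      using pdm_sym[OF pD, of "Di *v t" z] DDi by (simp add: inner_commute)
    finally show ?thesis by (simp add: inner_commute)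
  qed
  have h3: "2 * (t \<bullet> r) - (t \<bullet> t) / c \<le> c * (r \<bullet> r)"
  proof -
    have "0 \<le> (c *\<^sub>R r - t) \<bullet> (c *\<^sub>R r - t)" by simp
    also have "\<dots> = c * c * (r \<bullet> r) - 2 * c * (t \<bullet> r) + t \<bullet> t"
      by (simp add: inner_diff_left inner_diff_right inner_commute algebra_simps)
    finally have "0 \<le> c * (c * (r \<bullet> r) - 2 * (t \<bullet> r) + (t \<bullet> t) / c)"
      using c by (simp add: algebra_simps)
    then have "0 \<le> c * (r \<bullet> r) - 2 * (t \<bullet> r) + (t \<bullet> t) / c"
      using c by (simp add: zero_le_mult_iff)
    then show ?thesis by simp
  qed
  have ts: "t \<bullet> s = t \<bullet> (Di *v t) + (t \<bullet> t) / c"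
    using h1 by (metis inner_add_right inner_scaleR_right divide_inverse mult.commute
        mult_1 inverse_eq_divide)
  have "s \<bullet> t \<le> z \<bullet> (D *v z) + c * (r \<bullet> r)"
  proof -
    have "s = z + r" unfolding r_def by simp
    then have "t \<bullet> s = t \<bullet> z + t \<bullet> r" by (simp add: inner_add_right)
    then show ?thesis using h2 h3 ts by (simp add: inner_commute)
  qed
  moreover have "v - w = r" unfolding r_def s_def z_def by simp
  ultimately show ?thesis
    unfolding s_def[symmetric] z_def[symmetric] t_def Q_def Di_def
    by (simp add: power2_norm_eq_inner inner_commute)
qed


lemma update_ineq:
  fixes P :: "real^'n::finite^'n"
  assumes pP: "pdm P" and y: "y * y = 1"
    and mis: "y * (x \<bullet> (matrix_inv (P + outer x) *v (P *v a))) \<le> 0"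
  shows "(v - matrix_inv (P + outer x) *v (P *v a + y *\<^sub>R x)) \<bullet>
           ((P + outer x) *v (v - matrix_inv (P + outer x) *v (P *v a + y *\<^sub>R x)))
         - x \<bullet> (matrix_inv (P + outer x) *v x)
         \<le> (v - a) \<bullet> (P *v (v - a)) + (v \<bullet> x)\<^sup>2 - 2 * y * (v \<bullet> x)"
proof -
  define Dk where "Dk = P + outer x"
  define Ki where "Ki = matrix_inv Dk"
  define e' where "e' = P *v a + y *\<^sub>R x"
  define g where "g = Ki *v (P *v a)"
  define h where "h = Ki *v x"
  define p where "p = x \<bullet> g"
  define a' where "a' = Ki *v e'"
  have pD: "pdm Dk" unfolding Dk_def using pdm_add_outer[OF pP] .
  have iD: "invertible Dk" using pdm_invertible[OF pD] .
  have pK: "pdm Ki" unfolding Ki_def using pdm_inv[OF pD] .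
  have Dka: "Dk *v a' = e'" unfolding a'_def Ki_def using inv_mulv[OF iD] by simp
  have Dkg: "Dk *v g = P *v a" unfolding g_def Ki_def using inv_mulv[OF iD] by simp
  have Dkw: "Dk *v w = P *v w + (x \<bullet> w) *\<^sub>R x" for w
    unfolding Dk_def by (simp add: matrix_vector_mult_add_rdistrib outer_mulv)
  have ag: "a' = g + y *\<^sub>R h"
    unfolding a'_def g_def h_def e'_def by (simp add: matrix_vector_right_distrib matrix_vector_mult_scaleR)
  have L: "(v - a') \<bullet> (Dk *v (v - a')) = v \<bullet> (Dk *v v) - 2 * (v \<bullet> e') + a' \<bullet> e'"
  proof -
    have "(v - a') \<bullet> (Dk *v (v - a')) = v \<bullet> (Dk *v v) - v \<bullet> e' - a' \<bullet> (Dk *v v) + a' \<bullet> e'"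
      by (simp add: matrix_vector_mult_diff_distrib Dka inner_diff_left inner_diff_right)
    moreover have "a' \<bullet> (Dk *v v) = e' \<bullet> v" using pdm_sym[OF pD, of a' v] Dka by simp
    ultimately show ?thesis by (simp add: inner_commute)
  qed
  have vDv: "v \<bullet> (Dk *v v) = v \<bullet> (P *v v) + (x \<bullet> v)\<^sup>2"
    by (simp add: Dkw inner_add_right power2_eq_square inner_commute)
  have R: "(v - a) \<bullet> (P *v (v - a)) = v \<bullet> (P *v v) - 2 * (v \<bullet> (P *v a)) + a \<bullet> (P *v a)"
  proof -
    have "(v - a) \<bullet> (P *v (v - a)) = v \<bullet> (P *v v) - v \<bullet> (P *v a) - a \<bullet> (P *v v) + a \<bullet> (P *v a)"
      by (simp add: matrix_vector_mult_diff_distrib inner_diff_left inner_diff_right)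
    moreover have "a \<bullet> (P *v v) = v \<bullet> (P *v a)" using pdm_sym[OF pP, of a v] by (simp add: inner_commute)
    ultimately show ?thesis by simp
  qed
  have ve: "v \<bullet> e' = v \<bullet> (P *v a) + y * (v \<bullet> x)"
    unfolding e'_def by (simp add: inner_add_right)
  have hPa: "h \<bullet> (P *v a) = p"
    unfolding h_def p_def g_def using pdm_sym[OF pK, of x "P *v a"] by (simp add: inner_commute)
  have ae: "a' \<bullet> e' = g \<bullet> (P *v a) + 2 * y * p + x \<bullet> h"
  proof -
    have "a' \<bullet> e' = g \<bullet> (P *v a) + y * (g \<bullet> x) + y * (h \<bullet> (P *v a)) + (y * y) * (h \<bullet> x)"
      unfolding ag e'_def by (simp add: inner_add_left inner_add_right algebra_simps)
    then show ?thesis using hPa y by (simp add: p_def inner_commute)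
  qed
  have gPa: "g \<bullet> (P *v a) = g \<bullet> (P *v g) + (x \<bullet> g)\<^sup>2"
    using Dkg[symmetric] Dkw[of g] by (simp add: inner_add_right power2_eq_square inner_commute)
  have key: "g \<bullet> (P *v a) \<le> a \<bullet> (P *v a)"
  proof -
    have "0 \<le> (a - g) \<bullet> (P *v (a - g))" using pdm_nonneg[OF pP] .
    also have "\<dots> = a \<bullet> (P *v a) - a \<bullet> (P *v g) - g \<bullet> (P *v a) + g \<bullet> (P *v g)"
      by (simp add: matrix_vector_mult_diff_distrib inner_diff_left inner_diff_right)
    also have "a \<bullet> (P *v g) = g \<bullet> (P *v a)" using pdm_sym[OF pP, of a g] by (simp add: inner_commute)
    finally show ?thesis using gPa by (smt (verit) zero_le_power2)
  qed
  have yp: "y * p \<le> 0" using mis unfolding p_def g_def Ki_def Dk_def .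
  show ?thesis
    unfolding Dk_def[symmetric] Ki_def[symmetric] e'_def[symmetric] a'_def[symmetric] h_def[symmetric]
    using L vDv R ve ae key yp by (simp add: inner_commute) 
qed


lemma sl_append:
  assumes "finite M" "\<forall>t\<in>M. t < n"
  shows "sorted_list_of_set (insert n M) = sorted_list_of_set M @ [n]"
proof -
  have "sorted_wrt (<) (sorted_list_of_set M @ [n]) \<and> set (sorted_list_of_set M @ [n]) = insert n M
        \<and> length (sorted_list_of_set M @ [n]) = card (insert n M)"
    using assms by (auto simp: sorted_wrt_append strict_sorted_list_of_set)
  then show ?thesis
    using sorted_list_of_set_unique[of "insert n M" "sorted_list_of_set M @ [n]"] assms(1)
    by simp
qed

definition qf :: "'n::finite mat \<times> 'n vec \<Rightarrow> 'n vec \<Rightarrow> real" where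
  "qf s w = (w - matrix_inv (fst s) *v snd s) \<bullet> (fst s *v (w - matrix_inv (fst s) *v snd s))"

lemma state_Suc:
  "lasec_state b c x y (Suc t) =
    (if lasec_mistake b c x y (Suc t)
     then (lasec_S c (fst (lasec_state b c x y t)) (x (Suc t)),
           matrix_inv (mat 1 + (1 / c) *\<^sub>R fst (lasec_state b c x y t)) *v snd (lasec_state b c x y t)
             + y (Suc t) *\<^sub>R x (Suc t))
     else lasec_state b c x y t)"
  by (simp add: lasec_mistake_def split: prod.split)

lemma mistakes_Suc:
  "lasec_mistakes b c x y (Suc T) =
    (if lasec_mistake b c x y (Suc T) then insert (Suc T) (lasec_mistakes b c x y T)
     else lasec_mistakes b c x y T)"
  unfolding lasec_mistakes_def by (auto simp: le_Suc_eq)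

lemma mistakes_bound: "t \<in> lasec_mistakes b c x y T \<Longrightarrow> 1 \<le> t \<and> t \<le> T"
  unfolding lasec_mistakes_def by auto

lemma state_pdm:
  assumes "0 < b" "b < c"
  shows "pdm (fst (lasec_state b c x y t))"
proof (induction t)
  case 0
  have "0 < b * c / (c - b)" using assms by simp
  then show ?case by (simp add: lasec_D0_def pdm_mat)
next
  case (Suc t)
  have "0 < 1 / c" using assms by simp
  then show ?case using Suc unfolding state_Suc
    by (simp add: lasec_S_def pdm_add_outer pdm_inv pdm_add_mat)
qed


lemma step_state:
  assumes b: "0 < b" "b < c" and mis: "lasec_mistake b c x y (Suc t)"
    and yv: "y (Suc t) = 1 \<or> y (Suc t) = -1"
  shows "qf (lasec_state b c x y (Suc t)) v' - x (Suc t) \<bullet> (matrix_inv (fst (lasec_state b c x y (Suc t))) *v x (Suc t))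
     \<le> qf (lasec_state b c x y t) w + c * (norm (v' - w))\<^sup>2 + (v' \<bullet> x (Suc t))\<^sup>2
        - 2 * y (Suc t) * (v' \<bullet> x (Suc t))"
proof -
  obtain D e where st: "lasec_state b c x y t = (D, e)" by (cases "lasec_state b c x y t")
  define P where "P = matrix_inv (matrix_inv D + mat (1 / c))"
  define a where "a = matrix_inv D *v e"
  have c: "0 < c" using b by simp
  have pD: "pdm D" using state_pdm[OF b, of x y t] st by simp
  have pP: "pdm P" unfolding P_def using pdm_inv[OF pdm_add_mat[OF pdm_inv[OF pD]]] c by simp
  have sh: "matrix_inv (mat 1 + (1 / c) *\<^sub>R D) *v e = P *v a"
    unfolding P_def a_def inv_shift[OF pD c] by (simp add: matrix_vector_mul_assoc)
  have m: "sgn (x (Suc t) \<bullet> (matrix_inv (P + outer (x (Suc t))) *v (P *v a))) \<noteq> y (Suc t)"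
    using mis sh st unfolding lasec_mistake_def lasec_p_def lasec_S_def P_def by simp
  have yp: "y (Suc t) * (x (Suc t) \<bullet> (matrix_inv (P + outer (x (Suc t))) *v (P *v a))) \<le> 0"
  proof -
    define p where "p = x (Suc t) \<bullet> (matrix_inv (P + outer (x (Suc t))) *v (P *v a))"
    have "sgn p \<noteq> y (Suc t)" using m p_def by simp
    then have "y (Suc t) * p \<le> 0" using yv
      by (auto simp: sgn_if split: if_splits)
    then show ?thesis using p_def by simp
  qed
  have yy: "y (Suc t) * y (Suc t) = 1" using yv by auto
  have st': "lasec_state b c x y (Suc t) = (P + outer (x (Suc t)), P *v a + y (Suc t) *\<^sub>R x (Suc t))"
    using mis unfolding state_Suc st by (simp add: sh lasec_S_def P_def)
  have u: "qf (lasec_state b c x y (Suc t)) v' - x (Suc t) \<bullet> (matrix_inv (fst (lasec_state b c x y (Suc t))) *v x (Suc t))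
     \<le> (v' - a) \<bullet> (P *v (v' - a)) + (v' \<bullet> x (Suc t))\<^sup>2 - 2 * y (Suc t) * (v' \<bullet> x (Suc t))"
    unfolding st' qf_def using update_ineq[OF pP yy yp, of v'] by simp
  have i: "(v' - a) \<bullet> (P *v (v' - a)) \<le> qf (lasec_state b c x y t) w + c * (norm (v' - w))\<^sup>2"
    unfolding st qf_def P_def a_def using infconv[OF pD c, of v' "matrix_inv D *v e" w] by simp
  show ?thesis using u i by linarith
qed


definition mlist :: "real \<Rightarrow> real \<Rightarrow> (nat \<Rightarrow> 'd::finite vec) \<Rightarrow> (nat \<Rightarrow> real) \<Rightarrow> nat \<Rightarrow> nat list" where
  "mlist b c x y T = sorted_list_of_set (lasec_mistakes b c x y T)"

lemma invariant:
  assumes b: "0 < b" "b < c" and yv: "\<forall>t\<in>{1..T}. y t = 1 \<or> y t = -1"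
  shows "qf (lasec_state b c x y T) (v (length (mlist b c x y T)))
     - (\<Sum>k=1..length (mlist b c x y T). x (mlist b c x y T ! (k - 1)) \<bullet>
          (matrix_inv (fst (lasec_state b c x y (mlist b c x y T ! (k - 1)))) *v x (mlist b c x y T ! (k - 1))))
     \<le> v 0 \<bullet> (lasec_D0 b c *v v 0)
       + (\<Sum>k=1..length (mlist b c x y T). c * (norm (v k - v (k - 1)))\<^sup>2
            + (v k \<bullet> x (mlist b c x y T ! (k - 1)))\<^sup>2
            - 2 * y (mlist b c x y T ! (k - 1)) * (v k \<bullet> x (mlist b c x y T ! (k - 1))))"
  using yv
proof (induction T arbitrary: v)
  case 0
  have "lasec_mistakes b c x y 0 = {}" unfolding lasec_mistakes_def by auto
  then show ?case by (simp add: mlist_def qf_def)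
next
  case (Suc T)
  have IH: "\<And>v. qf (lasec_state b c x y T) (v (length (mlist b c x y T)))
     - (\<Sum>k=1..length (mlist b c x y T). x (mlist b c x y T ! (k - 1)) \<bullet>
          (matrix_inv (fst (lasec_state b c x y (mlist b c x y T ! (k - 1)))) *v x (mlist b c x y T ! (k - 1))))
     \<le> v 0 \<bullet> (lasec_D0 b c *v v 0)
       + (\<Sum>k=1..length (mlist b c x y T). c * (norm (v k - v (k - 1)))\<^sup>2
            + (v k \<bullet> x (mlist b c x y T ! (k - 1)))\<^sup>2
            - 2 * y (mlist b c x y T ! (k - 1)) * (v k \<bullet> x (mlist b c x y T ! (k - 1))))"
    using Suc by auto
  show ?case
  proof (cases "lasec_mistake b c x y (Suc T)")
    case False
    then have "mlist b c x y (Suc T) = mlist b c x y T" "lasec_state b c x y (Suc T) = lasec_state b c x y T"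
      unfolding mlist_def mistakes_Suc state_Suc by simp_all
    then show ?thesis using IH by simp
  next
    case True
    define L where "L = mlist b c x y T"
    define m where "m = length L"
    have fin: "finite (lasec_mistakes b c x y T)" unfolding lasec_mistakes_def by simp
    have L': "mlist b c x y (Suc T) = L @ [Suc T]"
  proof -
    have "\<forall>t\<in>lasec_mistakes b c x y T. t < Suc T" using mistakes_bound[of _ b c x y T] by fastforce
    then show ?thesis unfolding mlist_def mistakes_Suc L_def using True sl_append[OF fin] by simp
  qed
    have nth: "(L @ [Suc T]) ! (k - 1) = L ! (k - 1)" if "k \<in> {1..m}" for k
      using that unfolding m_def by (auto simp: nth_append)
    have nth2: "(L @ [Suc T]) ! (k - Suc 0) = L ! (k - Suc 0)" if "k \<in> {Suc 0..m}" for k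
      using that unfolding m_def by (auto simp: nth_append)
    have last: "(L @ [Suc T]) ! (Suc m - 1) = Suc T" unfolding m_def by simp
    have len: "length (L @ [Suc T]) = Suc m" unfolding m_def by simp
    have yS: "y (Suc T) = 1 \<or> y (Suc T) = -1" using Suc.prems by auto
    have st: "qf (lasec_state b c x y (Suc T)) (v (Suc m)) - x (Suc T) \<bullet> (matrix_inv (fst (lasec_state b c x y (Suc T))) *v x (Suc T))
     \<le> qf (lasec_state b c x y T) (v m) + c * (norm (v (Suc m) - v m))\<^sup>2 + (v (Suc m) \<bullet> x (Suc T))\<^sup>2
        - 2 * y (Suc T) * (v (Suc m) \<bullet> x (Suc T))"
      using step_state[OF b True yS] .
    have s1: "(\<Sum>k=1..length (L @ [Suc T]). x ((L @ [Suc T]) ! (k - 1)) \<bullet>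
          (matrix_inv (fst (lasec_state b c x y ((L @ [Suc T]) ! (k - 1)))) *v x ((L @ [Suc T]) ! (k - 1))))
        = (\<Sum>k=1..m. x (L ! (k - 1)) \<bullet>
          (matrix_inv (fst (lasec_state b c x y (L ! (k - 1)))) *v x (L ! (k - 1))))
          + x (Suc T) \<bullet> (matrix_inv (fst (lasec_state b c x y (Suc T))) *v x (Suc T))"
      unfolding len sum.cl_ivl_Suc using last apply simp
      by (rule sum.cong) (auto simp: nth_append m_def)
    have s2: "(\<Sum>k=1..length (L @ [Suc T]). c * (norm (v k - v (k - 1)))\<^sup>2
            + (v k \<bullet> x ((L @ [Suc T]) ! (k - 1)))\<^sup>2
            - 2 * y ((L @ [Suc T]) ! (k - 1)) * (v k \<bullet> x ((L @ [Suc T]) ! (k - 1))))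
        = (\<Sum>k=1..m. c * (norm (v k - v (k - 1)))\<^sup>2
            + (v k \<bullet> x (L ! (k - 1)))\<^sup>2
            - 2 * y (L ! (k - 1)) * (v k \<bullet> x (L ! (k - 1))))
          + (c * (norm (v (Suc m) - v m))\<^sup>2 + (v (Suc m) \<bullet> x (Suc T))\<^sup>2
             - 2 * y (Suc T) * (v (Suc m) \<bullet> x (Suc T)))"
      unfolding len sum.cl_ivl_Suc using last apply simp
      by (rule sum.cong) (auto simp: nth_append m_def)
    show ?thesis
      unfolding L' s1 s2 using IH[of v] st unfolding L_def[symmetric] m_def[symmetric]
      by (simp add: m_def)
  qed
qed


lemma quad_bound:
  fixes Q R S :: real
  assumes all: "\<And>\<alpha>. - R \<le> \<alpha>\<^sup>2 * Q - 2 * \<alpha> * S" and Q: "0 \<le> Q" and R: "0 \<le> R"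
  shows "S \<le> sqrt (Q * R)"
proof (cases "S \<le> 0")
  case True then show ?thesis using Q R by (meson order_trans real_sqrt_ge_zero zero_le_mult_iff)
next
  case False
  then have S: "0 < S" by simp
  show ?thesis
  proof (cases "Q = 0")
    case True
    have a: "- R \<le> ((R + 1) / (2 * S))\<^sup>2 * Q - 2 * ((R + 1) / (2 * S)) * S" using all .
    have e: "(R + 1) / (2 * S) * S = (R + 1) / 2" using S by (simp add: field_simps)
    have "- R \<le> - (R + 1)" using a e True S by (simp add: mult.assoc split: if_splits)
    then show ?thesis by simp
  next
    case False
    then have Qp: "0 < Q" using Q by simp
    have "- R \<le> (S / Q)\<^sup>2 * Q - 2 * (S / Q) * S" using all .
    also have "\<dots> = - (S\<^sup>2 / Q)" using Qp by (simp add: field_simps power2_eq_square)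
    finally have "S\<^sup>2 / Q \<le> R" by simp
    then have "S\<^sup>2 \<le> Q * R" using Qp by (simp add: field_simps)
    then show ?thesis using S by (meson real_le_rsqrt)
  qed
qed

lemma sum_set_list:
  fixes g :: "nat \<Rightarrow> real"
  assumes "finite M"
  shows "(\<Sum>t\<in>M. g t) = (\<Sum>k=1..length (sorted_list_of_set M). g (sorted_list_of_set M ! (k - 1)))"
proof -
  let ?L = "sorted_list_of_set M"
  have "(\<Sum>t\<in>M. g t) = sum_list (map g ?L)"
    using sum_list_distinct_conv_sum_set[of ?L g] assms by simp
  also have "\<dots> = (\<Sum>i<length ?L. g (?L ! i))"
    by (simp add: sum_list_sum_nth atLeast0LessThan)
  also have "\<dots> = (\<Sum>k=1..length ?L. g (?L ! (k - 1)))"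
    by (simp add: sum.atLeast1_atMost_eq)
  finally show ?thesis .
qed


lemma first_terms:
  fixes u1 :: "real^'n::finite"
  assumes "0 < b" "b < c"
  shows "((\<alpha> * (c - b) / c) *\<^sub>R u1) \<bullet> (lasec_D0 b c *v ((\<alpha> * (c - b) / c) *\<^sub>R u1))
     + c * (norm (\<alpha> *\<^sub>R u1 - (\<alpha> * (c - b) / c) *\<^sub>R u1))\<^sup>2 = \<alpha>\<^sup>2 * (b * (norm u1)\<^sup>2)"
proof -
  have e: "\<alpha> *\<^sub>R u1 - (\<alpha> * (c - b) / c) *\<^sub>R u1 = (\<alpha> * b / c) *\<^sub>R u1"
    using assms by (simp add: algebra_simps diff_divide_distrib flip: scaleR_diff_left)
  have n: "u1 \<bullet> u1 = (norm u1)\<^sup>2" by (simp add: power2_norm_eq_inner)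
  have "((\<alpha> * (c - b) / c) *\<^sub>R u1) \<bullet> (lasec_D0 b c *v ((\<alpha> * (c - b) / c) *\<^sub>R u1))
      = (b * c / (c - b)) * (\<alpha> * (c - b) / c)\<^sup>2 * (norm u1)\<^sup>2"
    by (simp add: lasec_D0_def mat_mulv n power2_eq_square)
  moreover have "c * (norm (\<alpha> *\<^sub>R u1 - (\<alpha> * (c - b) / c) *\<^sub>R u1))\<^sup>2 = c * (\<alpha> * b / c)\<^sup>2 * (norm u1)\<^sup>2"
    unfolding e by (simp add: power_mult_distrib power_divide power2_abs)
  moreover have "(b * c / (c - b)) * (\<alpha> * (c - b) / c)\<^sup>2 * (norm u1)\<^sup>2 + c * (\<alpha> * b / c)\<^sup>2 * (norm u1)\<^sup>2
      = \<alpha>\<^sup>2 * (b * (norm u1)\<^sup>2)"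
    using assms by (simp add: field_simps power2_eq_square)
  ultimately show ?thesis by linarith
qed


theorem theorem2:
  fixes b c \<gamma> :: real and T :: nat
    and x :: "nat \<Rightarrow> real ^ 'd::finite" and y :: "nat \<Rightarrow> real"
    and u :: "nat \<Rightarrow> real ^ 'd"
  assumes "0 < b" and "b < c"
    and "\<forall>t \<in> {1..T}. y t = 1 \<or> y t = -1"
    and "0 < \<gamma>"
  shows
    "let M = lasec_mistakes b c x y T;
         m = card M;
         tk = (\<lambda>k. sorted_list_of_set M ! (k - 1));
         Dk = (\<lambda>k. fst (lasec_state b c x y (tk k)));
         V = (\<Sum>k = 2..m. (norm (u (tk k) - u (tk (k - 1))))\<^sup>2)
     in real m \<le> hinge_total \<gamma> x y u T / \<gamma>
          + (1 / \<gamma>) * sqrt ((b * (norm (u (tk 1)))\<^sup>2 + c * V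
                 + (\<Sum>k = 1..m. (u (tk k) \<bullet> x (tk k))\<^sup>2))
               * (\<Sum>k = 1..m. x (tk k) \<bullet> (matrix_inv (Dk k) *v x (tk k))))"
proof -
  note b = assms(1,2)
  define M where "M = lasec_mistakes b c x y T"
  define L where "L = sorted_list_of_set M"
  define m where "m = length L"
  define tk where "tk = (\<lambda>k. L ! (k - 1))"
  define Dk where "Dk = (\<lambda>k. fst (lasec_state b c x y (tk k)))"
  define V where "V = (\<Sum>k = 2..m. (norm (u (tk k) - u (tk (k - 1))))\<^sup>2)"
  define Q where "Q = b * (norm (u (tk 1)))\<^sup>2 + c * V + (\<Sum>k = 1..m. (u (tk k) \<bullet> x (tk k))\<^sup>2)"
  define R where "R = (\<Sum>k = 1..m. x (tk k) \<bullet> (matrix_inv (Dk k) *v x (tk k)))"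
  define S where "S = (\<Sum>k = 1..m. y (tk k) * (u (tk k) \<bullet> x (tk k)))"
  define H where "H = hinge_total \<gamma> x y u T"
  have fin: "finite M" unfolding M_def lasec_mistakes_def by simp
  have cm: "card M = m" unfolding m_def L_def by simp
  have ml: "mlist b c x y T = L" unfolding mlist_def L_def M_def ..
  have R0: "0 \<le> R" unfolding R_def Dk_def
    by (rule sum_nonneg) (simp add: pdm_nonneg pdm_inv state_pdm[OF b])
  have Q0: "0 \<le> Q" unfolding Q_def V_def using b
    by (intro add_nonneg_nonneg sum_nonneg mult_nonneg_nonneg) auto
  have Hs: "real m * \<gamma> - S \<le> H"
  proof -
    have sub: "M \<subseteq> {1..T}" unfolding M_def lasec_mistakes_def by auto
    have "(\<Sum>t\<in>M. \<gamma> - y t * (u t \<bullet> x t)) \<le> (\<Sum>t\<in>M. max 0 (\<gamma> - y t * (u t \<bullet> x t)))"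
      by (rule sum_mono) simp
    also have "\<dots> \<le> H" unfolding H_def hinge_total_def
      by (rule sum_mono2[OF _ sub]) auto
    finally have "(\<Sum>t\<in>M. \<gamma> - y t * (u t \<bullet> x t)) \<le> H" .
    moreover have "(\<Sum>t\<in>M. \<gamma> - y t * (u t \<bullet> x t)) = real m * \<gamma> - S"
      unfolding sum_set_list[OF fin] S_def tk_def m_def L_def
      by (simp add: sum_subtractf)
    ultimately show ?thesis by simp
  qed
  have main: "real m \<le> H / \<gamma> + (1 / \<gamma>) * sqrt (Q * R)"
  proof (cases "m = 0")
    case True
    have "0 \<le> H" unfolding H_def hinge_total_def by (rule sum_nonneg) simp
    then show ?thesis using True assms(4) by (simp add: R_def)
  next
    case False
    then have m1: "1 \<le> m" by simp
    have quad: "- R \<le> \<alpha>\<^sup>2 * Q - 2 * \<alpha> * S" for \<alpha>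
    proof -
      define v where "v = (\<lambda>k. if k = 0 then (\<alpha> * (c - b) / c) *\<^sub>R u (tk 1) else \<alpha> *\<^sub>R u (tk k))"
      have inv: "qf (lasec_state b c x y T) (v m) - R
        \<le> v 0 \<bullet> (lasec_D0 b c *v v 0)
          + (\<Sum>k=1..m. c * (norm (v k - v (k - 1)))\<^sup>2 + (v k \<bullet> x (tk k))\<^sup>2
               - 2 * y (tk k) * (v k \<bullet> x (tk k)))"
        using invariant[OF b assms(3), of x v] unfolding ml R_def Dk_def tk_def m_def .
      have q0: "0 \<le> qf (lasec_state b c x y T) (v m)"
        unfolding qf_def by (simp add: pdm_nonneg state_pdm[OF b])
      have sp: "(\<Sum>k=1..m. c * (norm (v k - v (k - 1)))\<^sup>2 + (v k \<bullet> x (tk k))\<^sup>2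
               - 2 * y (tk k) * (v k \<bullet> x (tk k)))
          = (\<Sum>k=1..m. c * (norm (v k - v (k - 1)))\<^sup>2) + (\<Sum>k=1..m. (v k \<bullet> x (tk k))\<^sup>2)
             - (\<Sum>k=1..m. 2 * y (tk k) * (v k \<bullet> x (tk k)))"
        by (simp add: sum.distrib sum_subtractf)
      have s1: "(\<Sum>k=1..m. c * (norm (v k - v (k - 1)))\<^sup>2)
          = c * (norm (v 1 - v 0))\<^sup>2 + \<alpha>\<^sup>2 * (c * V)"
      proof -
        have "(\<Sum>k=1..m. c * (norm (v k - v (k - 1)))\<^sup>2)
            = c * (norm (v 1 - v 0))\<^sup>2 + (\<Sum>k=2..m. c * (norm (v k - v (k - 1)))\<^sup>2)"
          using sum.atLeast_Suc_atMost[OF m1, of "\<lambda>k. c * (norm (v k - v (k - 1)))\<^sup>2"]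
          by (simp add: numeral_2_eq_2)
        also have "(\<Sum>k=2..m. c * (norm (v k - v (k - 1)))\<^sup>2)
            = (\<Sum>k=2..m. \<alpha>\<^sup>2 * (c * (norm (u (tk k) - u (tk (k - 1))))\<^sup>2))"
        proof (rule sum.cong)
          fix k assume "k \<in> {2..m}"
          then have "v k - v (k - 1) = \<alpha> *\<^sub>R (u (tk k) - u (tk (k - 1)))"
            unfolding v_def by (simp add: scaleR_diff_right)
          then show "c * (norm (v k - v (k - 1)))\<^sup>2 = \<alpha>\<^sup>2 * (c * (norm (u (tk k) - u (tk (k - 1))))\<^sup>2)"
            by (simp add: power_mult_distrib power2_abs)
        qed simp
        finally show ?thesis unfolding V_def by (simp add: sum_distrib_left)
      qed
      have s2: "(\<Sum>k=1..m. (v k \<bullet> x (tk k))\<^sup>2) = \<alpha>\<^sup>2 * (\<Sum>k = 1..m. (u (tk k) \<bullet> x (tk k))\<^sup>2)"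
        unfolding sum_distrib_left
        by (rule sum.cong) (auto simp: v_def power_mult_distrib)
      have s3: "(\<Sum>k=1..m. 2 * y (tk k) * (v k \<bullet> x (tk k))) = 2 * \<alpha> * S"
        unfolding S_def sum_distrib_left
        by (rule sum.cong) (auto simp: v_def)
      have f: "v 0 \<bullet> (lasec_D0 b c *v v 0) + c * (norm (v 1 - v 0))\<^sup>2 = \<alpha>\<^sup>2 * (b * (norm (u (tk 1)))\<^sup>2)"
        unfolding v_def using first_terms[OF b, of \<alpha> "u (tk 1)"] by simp
      have "\<alpha>\<^sup>2 * Q = \<alpha>\<^sup>2 * (b * (norm (u (tk 1)))\<^sup>2) + \<alpha>\<^sup>2 * (c * V) + \<alpha>\<^sup>2 * (\<Sum>k = 1..m. (u (tk k) \<bullet> x (tk k))\<^sup>2)"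
        unfolding Q_def by (simp add: algebra_simps)
      then show ?thesis using inv q0 sp s1 s2 s3 f by linarith
    qed
    have "S \<le> sqrt (Q * R)" using quad_bound[OF quad Q0 R0] .
    then have "real m * \<gamma> \<le> H + sqrt (Q * R)" using Hs by linarith
    then show ?thesis using assms(4) by (simp add: field_simps)
  qed
  show ?thesis
    using main unfolding Let_def H_def Q_def V_def R_def Dk_def tk_def m_def L_def M_def
    by simp
qed

end
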